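(* Let $n>k\ge1$ be coprime integers, $\eta$ in the upper half-plane, $\Lambda=\mathbb{Z}+\mathbb{Z}\eta$, $E=\mathbb{C}/\Lambda$. For all $\tau\in\mathbb{C}$, there is an isomorphism of graded algebras $Q_{n,k}(E,\tau)^!\cong S_{n,n-k}(E,\tau)$.
   Context: Write $e(z)=e^{2\pi i z}$ and $\theta(z)=\sum_{m\in\mathbb{Z}}(-1)^m e\big(mz+\tfrac12 m(m-1)\eta\big)$. For $\alpha\in\mathbb{Z}$ put $\theta_\alpha(z)=e\big(\alpha z+\tfrac{\alpha}{2n}+\tfrac{\alpha(\alpha-n)}{2n}\eta\big)\prod_{m=0}^{n-1}\theta\big(z+\tfrac mn+\tfrac{\alpha}{n}\eta\big)$, regarded as indexed by $\alpha\in\mathbb{Z}_n$. Let $V$ be an $n$-dimensional complex vector space with basis $x_i$, $i\in\mathbb{Z}_n$, and $TV$ its tensor algebra with $V$ in degree one. For integers $1\le k'<n$ coprime to $n$, $\tau\in\mathbb{C}\setminus\frac1n\Lambda$ and $z\in\mathbb{C}$, define $R_{n,k',\tau}(z)\in\mathrm{End}(V\otimes V)$ by $$R_{n,k',\tau}(z)(x_i\otimes x_j)=\frac{\theta_0(-z)\cdots\theta_{n-1}(-z)}{\theta_1(0)\cdots\theta_{n-1}(0)}\sum_{r\in\mathbb{Z}_n}\frac{\theta_{j-i+r(k'-1)}(-z+\tau)}{\theta_{j-i-r}(-z)\,\theta_{k'r}(\tau)}\,x_{j-r}\otimes x_{i+r}.$$ For $\tau\notin\frac1n\Lambda$ define $Q_{n,k'}(E,\tau):=TV/(\operatorname{im}R_{n,k',\tau}(\tau))$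 and $S_{n,k'}(E,\tau):=TV/(\ker R_{n,k',\tau}(\tau))$; for $\tau\in\frac1n\Lambda$, $R_{n,k',\tau}(\tau)$ is replaced in both definitions by the limit $\lim_{t\to0}R_{n,k',t}(t+\tau)$. For $A=TV/(W)$ with $W\subseteq V\otimes V$, the quadratic dual is $A^!=TV^*/(W^\perp)$, $W^\perp\subseteq V^*\otimes V^*=(V\otimes V)^*$ the annihilator of $W$. *)

theory Defs
  imports "HOL-Analysis.Analysis"
begin

definition ee :: "complex \<Rightarrow> complex" where
  "ee z = exp (2 * of_real pi * \<i> * z)"

definition theta :: "complex \<Rightarrow> complex \<Rightarrow> complex" where
  "theta \<eta> z = (\<Sum>\<^sub>\<infinity> m::int. (if even m then 1 else -1) *
       ee (of_int m * z + of_int (m * (m - 1)) / 2 * \<eta>))"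

definition theta_idx :: "nat \<Rightarrow> complex \<Rightarrow> int \<Rightarrow> complex \<Rightarrow> complex" where
  "theta_idx n \<eta> \<alpha> z =
     ee (of_int \<alpha> * z + of_int \<alpha> / (2 * of_nat n)
         + of_int (\<alpha> * (\<alpha> - int n)) / (2 * of_nat n) * \<eta>)
     * (\<Prod>m<n. theta \<eta> (z + of_nat m / of_nat n + of_int \<alpha> / of_nat n * \<eta>))"

text \<open>theta indexed by Z_n: we use the representative in {0..n-1}.\<close>
definition thetaZ :: "nat \<Rightarrow> complex \<Rightarrow> int \<Rightarrow> complex \<Rightarrow> complex" where
  "thetaZ n \<eta> \<alpha> z = theta_idx n \<eta> (\<alpha> mod int n) z"

text \<open>Matrix entry: coefficient of x_p \<otimes> x_q in R_{n,k',tau}(z)(x_i \<otimes> x_j),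
  all indices in {0..n-1}. The summand with index r contributes to
  x_{j-r} \<otimes> x_{i+r}, so r = j - p and we need p + q = i + j mod n.\<close>
definition R_entry :: "nat \<Rightarrow> nat \<Rightarrow> complex \<Rightarrow> complex \<Rightarrow> complex
    \<Rightarrow> nat \<Rightarrow> nat \<Rightarrow> nat \<Rightarrow> nat \<Rightarrow> complex" where
  "R_entry n k' \<eta> \<tau> z p q i j =
     (if (int p + int q) mod int n = (int i + int j) mod int n then
        (let r = (int j - int p) mod int n in
          ((\<Prod>a<n. thetaZ n \<eta> (int a) (- z)) / (\<Prod>a\<in>{1..<n}. thetaZ n \<eta> (int a) 0))
          * (thetaZ n \<eta> (int j - int i + r * (int k' - 1)) (- z + \<tau>)
             / (thetaZ n \<eta> (int j - int i - r) (- z) * thetaZ n \<eta> (int k' * r) \<tau>)))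
      else 0)"

definition frac_lattice :: "nat \<Rightarrow> complex \<Rightarrow> complex set" where
  "frac_lattice n \<eta> = {(of_int a + of_int b * \<eta>) / of_nat n | a b. True}"

definition R_op :: "nat \<Rightarrow> nat \<Rightarrow> complex \<Rightarrow> complex \<Rightarrow> nat \<Rightarrow> nat \<Rightarrow> nat \<Rightarrow> nat \<Rightarrow> complex" where
  "R_op n k' \<eta> \<tau> p q i j =
     (if \<tau> \<in> frac_lattice n \<eta>
      then Lim (at 0) (\<lambda>t. R_entry n k' \<eta> t (t + \<tau>) p q i j)
      else R_entry n k' \<eta> \<tau> \<tau> p q i j)"

text \<open>An element of V^{\<otimes>d} (V with basis x_0..x_{n-1}) is a function on words:
  its coefficient on x_{w_1} \<otimes> ... \<otimes> x_{w_d}.\<close>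
definition tens :: "nat \<Rightarrow> nat \<Rightarrow> (nat list \<Rightarrow> complex) set" where
  "tens n d = {f. \<forall>w. f w \<noteq> 0 \<longrightarrow> length w = d \<and> set w \<subseteq> {..<n}}"

definition tprod :: "nat \<Rightarrow> (nat list \<Rightarrow> complex) \<Rightarrow> (nat list \<Rightarrow> complex) \<Rightarrow> nat list \<Rightarrow> complex" where
  "tprod a f g w = f (take a w) * g (drop a w)"

definition tunit :: "nat list \<Rightarrow> complex" where
  "tunit w = (if w = [] then 1 else 0)"

definition cspan :: "(nat list \<Rightarrow> complex) set \<Rightarrow> (nat list \<Rightarrow> complex) set" where
  "cspan S = {x. \<exists>F c. finite F \<and> F \<subseteq> S \<and> x = (\<lambda>w. \<Sum>v\<in>F. c v * v w)}"

text \<open>Degree-d component of the two-sided ideal (W) of TV, for W \<subseteq> V \<otimes> V.\<close>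
definition ideal_comp :: "nat \<Rightarrow> (nat list \<Rightarrow> complex) set \<Rightarrow> nat \<Rightarrow> (nat list \<Rightarrow> complex) set" where
  "ideal_comp n W d = cspan {tprod (a + 2) (tprod a u x) v | a b u x v.
      a + 2 + b = d \<and> u \<in> tens n a \<and> x \<in> W \<and> v \<in> tens n b}"

text \<open>Isomorphism of graded algebras TV/(W) \<cong> TU/(W') (V, U both with basis indexed by
  {0..n-1}): a family of linear maps F_d on the degree-d components V^{\<otimes>d} \<rightarrow> U^{\<otimes>d}
  which descend to bijections (V^{\<otimes>d}/I_d) \<rightarrow> (U^{\<otimes>d}/I'_d), compatible with
  multiplication and unit.\<close>
definition graded_alg_iso :: "nat \<Rightarrow> (nat list \<Rightarrow> complex) set \<Rightarrow> (nat list \<Rightarrow> complex) set \<Rightarrow> bool" where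
  "graded_alg_iso n W W' \<longleftrightarrow>
    (\<exists>F :: nat \<Rightarrow> (nat list \<Rightarrow> complex) \<Rightarrow> (nat list \<Rightarrow> complex).
       (\<forall>d. \<forall>x\<in>tens n d. F d x \<in> tens n d) \<and>
       (\<forall>d. \<forall>x\<in>tens n d. \<forall>y\<in>tens n d. \<forall>c a. F d (\<lambda>w. c * x w + a * y w) = (\<lambda>w. c * F d x w + a * F d y w)) \<and>
       (\<forall>d. \<forall>x\<in>tens n d. F d x \<in> ideal_comp n W' d \<longleftrightarrow> x \<in> ideal_comp n W d) \<and>
       (\<forall>d. \<forall>y\<in>tens n d. \<exists>x\<in>tens n d. (\<lambda>w. y w - F d x w) \<in> ideal_comp n W' d) \<and>
       (\<forall>a b. \<forall>x\<in>tens n a. \<forall>y\<in>tens n b.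
          (\<lambda>w. F (a + b) (tprod a x y) w - tprod a (F a x) (F b y) w) \<in> ideal_comp n W' (a + b)) \<and>
       (\<lambda>w. F 0 tunit w - tunit w) \<in> ideal_comp n W' 0)"

definition R_image :: "nat \<Rightarrow> nat \<Rightarrow> complex \<Rightarrow> complex \<Rightarrow> (nat list \<Rightarrow> complex) set" where
  "R_image n k' \<eta> \<tau> = {f \<in> tens n 2. \<exists>c :: nat \<Rightarrow> nat \<Rightarrow> complex.
      \<forall>p<n. \<forall>q<n. f [p, q] = (\<Sum>i<n. \<Sum>j<n. R_op n k' \<eta> \<tau> p q i j * c i j)}"

definition R_kernel :: "nat \<Rightarrow> nat \<Rightarrow> complex \<Rightarrow> complex \<Rightarrow> (nat list \<Rightarrow> complex) set" where
  "R_kernel n k' \<eta> \<tau> = {f \<in> tens n 2.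
      \<forall>p<n. \<forall>q<n. (\<Sum>i<n. \<Sum>j<n. R_op n k' \<eta> \<tau> p q i j * f [i, j]) = 0}"

text \<open>Annihilator W^\<perp> \<subseteq> V^* \<otimes> V^* = (V \<otimes> V)^*, in the dual bases,
  with (f \<otimes> g)(v \<otimes> w) = f(v) g(w).\<close>
definition perp :: "nat \<Rightarrow> (nat list \<Rightarrow> complex) set \<Rightarrow> (nat list \<Rightarrow> complex) set" where
  "perp n W = {\<xi> \<in> tens n 2. \<forall>f\<in>W. (\<Sum>i<n. \<Sum>j<n. \<xi> [i, j] * f [i, j]) = 0}"

text \<open>Q_{n,k'}(E,tau) = TV/(im R), S_{n,k'}(E,tau) = TV/(ker R); the quadratic dual of
  Q is TV^*/((im R)^\<perp>).\<close>

end

theory Submission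
  imports Defs
begin

definition nneg :: "nat \<Rightarrow> nat \<Rightarrow> nat" where
  "nneg n i = (if 0 < i \<and> i < n then n - i else i)"

lemma nneg_inv[simp]: "nneg n (nneg n i) = i"
  unfolding nneg_def by auto

lemma nneg_less[simp]: "nneg n i < n \<longleftrightarrow> i < n"
  unfolding nneg_def by auto

lemma nneg_int: "i < n \<Longrightarrow> \<exists>b. int (nneg n i) = - int i + int n * b"
  unfolding nneg_def
  by (cases "0 < i") (auto intro: exI[of _ 1] exI[of _ 0])

lemma thetaZ_cong: "a mod int n = b mod int n \<Longrightarrow> thetaZ n \<eta> a z = thetaZ n \<eta> b z"
  unfolding thetaZ_def by simp

lemma mod_wit: "(A::int) = B + N * W \<Longrightarrow> A mod N = B mod N"
  by simp

lemma R_entry_sym: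
  assumes "k < n" "p < n" "q < n" "i < n" "j < n"
  shows "R_entry n (n - k) \<eta> t z p q i j
       = R_entry n k \<eta> t z (nneg n i) (nneg n j) (nneg n p) (nneg n q)"
proof -
  define N where "N = int n"
  define K where "K = int k"
  define P where "P = int p"
  define Q where "Q = int q"
  define I where "I = int i"
  define J where "J = int j"
  obtain bp where Gp: "int (nneg n p) = - P + N * bp" using nneg_int[OF assms(2)] P_def N_def by auto
  obtain bq where Gq: "int (nneg n q) = - Q + N * bq" using nneg_int[OF assms(3)] Q_def N_def by auto
  obtain bi where Gi: "int (nneg n i) = - I + N * bi" using nneg_int[OF assms(4)] I_def N_def by auto
  obtain bj where Gj: "int (nneg n j) = - J + N * bj" using nneg_int[OF assms(5)] J_def N_def by auto
  have nk: "int (n - k) = N - K" using assms(1) N_def K_def by simp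
  have eqc: "int (nneg n i) + int (nneg n j) - (int (nneg n p) + int (nneg n q))
       = (P + Q - (I + J)) + N * (bi + bj - bp - bq)"
    by (simp add: Gp Gq Gi Gj algebra_simps)
  have cond: "((int (nneg n i) + int (nneg n j)) mod int n = (int (nneg n p) + int (nneg n q)) mod int n)
      \<longleftrightarrow> ((int p + int q) mod int n = (int i + int j) mod int n)"
    unfolding mod_eq_dvd_iff eqc N_def[symmetric] P_def[symmetric] Q_def[symmetric]
      I_def[symmetric] J_def[symmetric]
    by (simp add: dvd_add_left_iff)
  show ?thesis
  proof (cases "(int p + int q) mod int n = (int i + int j) mod int n")
    case False
    then show ?thesis using cond unfolding R_entry_def by simp
  next
    case True
    then have "N dvd (P + Q - (I + J))" unfolding mod_eq_dvd_iff N_def P_def Q_def I_def J_def .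
    then obtain e0 where E0: "P + Q - (I + J) = N * e0" by (auto elim: dvdE)
    define r where "r = (J - P) mod N"
    define r' where "r' = (int (nneg n q) - int (nneg n i)) mod N"
    define e1 where "e1 = - ((J - P) div N)"
    define e2 where "e2 = - ((int (nneg n q) - int (nneg n i)) div N)"
    have E1: "r = J - P + N * e1" unfolding r_def e1_def
      using div_mult_mod_eq[of "J - P" N] by (simp add: algebra_simps)
    have E2: "r' = int (nneg n q) - int (nneg n i) + N * e2" unfolding r'_def e2_def
      using div_mult_mod_eq[of "int (nneg n q) - int (nneg n i)" N] by (simp add: algebra_simps)
    define w where "w = e1 - e0 + bq - bi + e2"
    have W: "r' = - r + N * w" unfolding w_def using E1 E2 E0 Gq Gi by (simp add: algebra_simps)
    have c1: "(J - I + r * (N - K - 1)) mod N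
            = (int (nneg n q) - int (nneg n p) + r' * (K - 1)) mod N"
      apply (rule sym, rule mod_wit[where W = "2*e1 - e0 + bq - bp + w*(K-1) - r"])
      unfolding W Gq Gp using E1 E0 by algebra
    have c2: "(J - I - r) mod N = (int (nneg n q) - int (nneg n p) - r') mod N"
      apply (rule sym, rule mod_wit[where W = "2*e1 - e0 + bq - bp - w"])
      using W E1 E0 Gq Gp by (simp add: algebra_simps)
    have c3: "((N - K) * r) mod N = (K * r') mod N"
      apply (rule sym, rule mod_wit[where W = "K*w - r"])
      unfolding W by algebra
    have c1': "(int j - int i + ((int j - int p) mod int n) * (int (n - k) - 1)) mod int n
       = (int (nneg n q) - int (nneg n p) + ((int (nneg n q) - int (nneg n i)) mod int n) * (int k - 1)) mod int n"
      using c1 nk by (simp add: N_def K_def P_def Q_def I_def J_def r_def r'_def)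
    have c2': "(int j - int i - ((int j - int p) mod int n)) mod int n
       = (int (nneg n q) - int (nneg n p) - ((int (nneg n q) - int (nneg n i)) mod int n)) mod int n"
      using c2 by (simp add: N_def K_def P_def Q_def I_def J_def r_def r'_def)
    have c3': "(int (n - k) * ((int j - int p) mod int n)) mod int n
       = (int k * ((int (nneg n q) - int (nneg n i)) mod int n)) mod int n"
      using c3 nk by (simp add: N_def K_def P_def Q_def I_def J_def r_def r'_def)
    show ?thesis
      using True cond
      unfolding R_entry_def Let_def
      using thetaZ_cong[OF c1', of \<eta>] thetaZ_cong[OF c2', of \<eta>] thetaZ_cong[OF c3', of \<eta>]
      by simp
  qed
qed

lemma R_op_sym:
  assumes "k < n" "p < n" "q < n" "i < n" "j < n"
  shows "R_op n (n - k) \<eta> \<tau> p q i j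
       = R_op n k \<eta> \<tau> (nneg n i) (nneg n j) (nneg n p) (nneg n q)"
  unfolding R_op_def using R_entry_sym[OF assms] by simp

definition Fm :: "nat \<Rightarrow> (nat list \<Rightarrow> complex) \<Rightarrow> nat list \<Rightarrow> complex" where
  "Fm n x = (\<lambda>w. x (map (nneg n) w))"

lemma nneg_comp[simp]: "nneg n \<circ> nneg n = id"
  by (simp add: fun_eq_iff)

lemma Fm_inv[simp]: "Fm n (Fm n x) = x"
  unfolding Fm_def by simp

lemma Fm_tens:
  assumes "x \<in> tens n d" shows "Fm n x \<in> tens n d"
proof -
  have h: "\<And>w. x w \<noteq> 0 \<Longrightarrow> length w = d \<and> set w \<subseteq> {..<n}"
    using assms unfolding tens_def by blast
  show ?thesis unfolding tens_def Fm_def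
  proof (intro CollectI allI impI)
    fix w assume "x (map (nneg n) w) \<noteq> 0"
    from h[OF this] show "length w = d \<and> set w \<subseteq> {..<n}" by auto
  qed
qed

lemma Fm_tprod: "Fm n (tprod a x y) = tprod a (Fm n x) (Fm n y)"
  unfolding Fm_def tprod_def by (simp add: take_map drop_map)

lemma Fm_tunit: "Fm n tunit = tunit"
  unfolding Fm_def tunit_def by auto

lemma inj_Fm: "inj (Fm n)"
  by (rule injI) (metis Fm_inv)

lemma cspan_Fm:
  assumes "\<And>v. v \<in> S \<Longrightarrow> Fm n v \<in> T" "x \<in> cspan S"
  shows "Fm n x \<in> cspan T"
proof -
  obtain F c where F: "finite F" "F \<subseteq> S" "x = (\<lambda>w. \<Sum>v\<in>F. c v * v w)"
    using assms(2) unfolding cspan_def by blast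
  have "Fm n x = (\<lambda>w. \<Sum>v\<in>F. c (Fm n (Fm n v)) * Fm n v w)"
    unfolding F(3) by (simp add: Fm_def)
  also have "\<dots> = (\<lambda>w. \<Sum>v\<in>Fm n ` F. c (Fm n v) * v w)"
    by (rule ext, rule sum.reindex[symmetric, unfolded comp_def]) (rule inj_on_subset[OF inj_Fm], simp)
  finally have e: "Fm n x = (\<lambda>w. \<Sum>v\<in>Fm n ` F. c (Fm n v) * v w)" .
  have "finite (Fm n ` F)" using F(1) by simp
  moreover have "Fm n ` F \<subseteq> T" using F(2) assms(1) by blast
  ultimately show ?thesis unfolding cspan_def
    by (intro CollectI exI[of _ "Fm n ` F"] exI[of _ "\<lambda>v. c (Fm n v)"]) (simp add: e)
qed

lemma ideal_Fm:
  assumes "\<And>x. x \<in> W \<Longrightarrow> Fm n x \<in> W'" "x \<in> ideal_comp n W d"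
  shows "Fm n x \<in> ideal_comp n W' d"
  unfolding ideal_comp_def
proof (rule cspan_Fm[OF _ assms(2)[unfolded ideal_comp_def]])
  fix g assume "g \<in> {tprod (a + 2) (tprod a u x) v | a b u x v.
      a + 2 + b = d \<and> u \<in> tens n a \<and> x \<in> W \<and> v \<in> tens n b}"
  then obtain a b u x v where h: "g = tprod (a + 2) (tprod a u x) v" "a + 2 + b = d"
     "u \<in> tens n a" "x \<in> W" "v \<in> tens n b" by blast
  have "Fm n g = tprod (a + 2) (tprod a (Fm n u) (Fm n x)) (Fm n v)"
    unfolding h(1) Fm_tprod ..
  moreover have "Fm n u \<in> tens n a" "Fm n x \<in> W'" "Fm n v \<in> tens n b"
    using h Fm_tens assms(1) by auto
  ultimately show "Fm n g \<in> {tprod (a + 2) (tprod a u x) v | a b u x v.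
      a + 2 + b = d \<and> u \<in> tens n a \<and> x \<in> W' \<and> v \<in> tens n b}"
    using h(2) by blast
qed

lemma zero_ideal: "(\<lambda>w. 0) \<in> ideal_comp n W d"
  unfolding ideal_comp_def cspan_def by (intro CollectI exI[of _ "{}"]) auto

lemma sum4_swap:
  "(\<Sum>p\<in>A. \<Sum>q\<in>B. \<Sum>i\<in>C. \<Sum>j\<in>D. g p q i j)
   = (\<Sum>i\<in>C. \<Sum>j\<in>D. \<Sum>p\<in>A. \<Sum>q\<in>B. g p q i j)"
proof -
  have "(\<Sum>p\<in>A. \<Sum>q\<in>B. \<Sum>i\<in>C. \<Sum>j\<in>D. g p q i j)
      = (\<Sum>p\<in>A. \<Sum>i\<in>C. \<Sum>q\<in>B. \<Sum>j\<in>D. g p q i j)"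
    by (rule sum.cong[OF refl], rule sum.swap)
  also have "\<dots> = (\<Sum>i\<in>C. \<Sum>p\<in>A. \<Sum>q\<in>B. \<Sum>j\<in>D. g p q i j)"
    by (rule sum.swap)
  also have "\<dots> = (\<Sum>i\<in>C. \<Sum>p\<in>A. \<Sum>j\<in>D. \<Sum>q\<in>B. g p q i j)"
    by (rule sum.cong[OF refl], rule sum.cong[OF refl], rule sum.swap)
  also have "\<dots> = (\<Sum>i\<in>C. \<Sum>j\<in>D. \<Sum>p\<in>A. \<Sum>q\<in>B. g p q i j)"
    by (rule sum.cong[OF refl], rule sum.swap)
  finally show ?thesis .
qed

lemma perp_char:
  assumes "\<xi> \<in> tens n 2"
  shows "\<xi> \<in> perp n (R_image n k \<eta> \<tau>) \<longleftrightarrow>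
     (\<forall>a<n. \<forall>b<n. (\<Sum>p<n. \<Sum>q<n. \<xi> [p, q] * R_op n k \<eta> \<tau> p q a b) = 0)"
proof
  assume h: "\<xi> \<in> perp n (R_image n k \<eta> \<tau>)"
  show "\<forall>a<n. \<forall>b<n. (\<Sum>p<n. \<Sum>q<n. \<xi> [p, q] * R_op n k \<eta> \<tau> p q a b) = 0"
  proof (intro allI impI)
    fix a b assume ab: "a < n" "b < n"
    define f where "f = (\<lambda>w::nat list. if length w = 2 \<and> set w \<subseteq> {..<n}
        then R_op n k \<eta> \<tau> (w!0) (w!1) a b else 0)"
    define c where "c = (\<lambda>i j::nat. if i = a \<and> j = b then (1::complex) else 0)"
    have "f \<in> tens n 2" unfolding tens_def f_def by auto
    moreover have "\<forall>p<n. \<forall>q<n. f [p, q] = (\<Sum>i<n. \<Sum>j<n. R_op n k \<eta> \<tau> p q i j * c i j)"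
    proof (intro allI impI)
      fix p q assume "p < n" "q < n"
      have "(\<Sum>i<n. \<Sum>j<n. R_op n k \<eta> \<tau> p q i j * c i j)
          = (\<Sum>i<n. if i = a then R_op n k \<eta> \<tau> p q i b else 0)"
        unfolding c_def by (intro sum.cong refl) (auto simp: if_distrib if_distribR ab cong: if_cong)
      also have "\<dots> = R_op n k \<eta> \<tau> p q a b" using ab by simp
      finally show "f [p, q] = (\<Sum>i<n. \<Sum>j<n. R_op n k \<eta> \<tau> p q i j * c i j)"
        unfolding f_def using \<open>p < n\<close> \<open>q < n\<close> by simp
    qed
    ultimately have "f \<in> R_image n k \<eta> \<tau>" unfolding R_image_def by blast
    then have "(\<Sum>i<n. \<Sum>j<n. \<xi> [i, j] * f [i, j]) = 0" using h unfolding perp_def by blast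
    then show "(\<Sum>p<n. \<Sum>q<n. \<xi> [p, q] * R_op n k \<eta> \<tau> p q a b) = 0"
      unfolding f_def by simp
  qed
next
  assume h: "\<forall>a<n. \<forall>b<n. (\<Sum>p<n. \<Sum>q<n. \<xi> [p, q] * R_op n k \<eta> \<tau> p q a b) = 0"
  have "(\<Sum>i<n. \<Sum>j<n. \<xi> [i, j] * f [i, j]) = 0" if f: "f \<in> R_image n k \<eta> \<tau>" for f
  proof -
    obtain c where c: "\<forall>p<n. \<forall>q<n. f [p, q] = (\<Sum>i<n. \<Sum>j<n. R_op n k \<eta> \<tau> p q i j * c i j)"
      using f unfolding R_image_def by blast
    have "(\<Sum>p<n. \<Sum>q<n. \<xi> [p, q] * f [p, q])
        = (\<Sum>p<n. \<Sum>q<n. \<Sum>i<n. \<Sum>j<n. \<xi> [p, q] * R_op n k \<eta> \<tau> p q i j * c i j)"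
      using c by (simp add: sum_distrib_left mult.assoc)
    also have "\<dots> = (\<Sum>i<n. \<Sum>j<n. \<Sum>p<n. \<Sum>q<n. \<xi> [p, q] * R_op n k \<eta> \<tau> p q i j * c i j)"
      by (rule sum4_swap)
    also have "\<dots> = (\<Sum>i<n. \<Sum>j<n. (\<Sum>p<n. \<Sum>q<n. \<xi> [p, q] * R_op n k \<eta> \<tau> p q i j) * c i j)"
      by (simp add: sum_distrib_right)
    also have "\<dots> = 0" using h by simp
    finally show ?thesis .
  qed
  then show "\<xi> \<in> perp n (R_image n k \<eta> \<tau>)" unfolding perp_def using assms by blast
qed

lemma bij_nneg: "bij_betw (nneg n) {..<n} {..<n}"
  by (rule bij_betw_byWitness[where f' = "nneg n"]) auto

lemma ker_char:
  assumes "k < n" "\<xi> \<in> tens n 2"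
  shows "Fm n \<xi> \<in> R_kernel n (n - k) \<eta> \<tau> \<longleftrightarrow>
     (\<forall>a<n. \<forall>b<n. (\<Sum>p<n. \<Sum>q<n. \<xi> [p, q] * R_op n k \<eta> \<tau> p q a b) = 0)"
proof -
  have S: "(\<Sum>i<n. \<Sum>j<n. R_op n (n - k) \<eta> \<tau> p q i j * Fm n \<xi> [i, j])
      = (\<Sum>a<n. \<Sum>b<n. \<xi> [a, b] * R_op n k \<eta> \<tau> a b (nneg n p) (nneg n q))"
    if "p < n" "q < n" for p q
  proof -
    have "(\<Sum>i<n. \<Sum>j<n. R_op n (n - k) \<eta> \<tau> p q i j * Fm n \<xi> [i, j])
      = (\<Sum>i<n. \<Sum>j<n. \<xi> [nneg n i, nneg n j] * R_op n k \<eta> \<tau> (nneg n i) (nneg n j) (nneg n p) (nneg n q))"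
      using R_op_sym[OF assms(1) that] by (intro sum.cong refl) (simp add: Fm_def mult.commute)
    also have "\<dots> = (\<Sum>a<n. \<Sum>b<n. \<xi> [a, b] * R_op n k \<eta> \<tau> a b (nneg n p) (nneg n q))"
      apply (subst sum.reindex_bij_betw[OF bij_nneg, symmetric, where g = "\<lambda>a. \<Sum>b<n. \<xi> [a, b] * R_op n k \<eta> \<tau> a b (nneg n p) (nneg n q)"])
      apply (rule sum.cong[OF refl])
      apply (subst sum.reindex_bij_betw[OF bij_nneg, symmetric])
      by simp
    finally show ?thesis .
  qed
  have T: "Fm n \<xi> \<in> tens n 2" using Fm_tens[OF assms(2)] .
  show ?thesis
  proof
    assume "Fm n \<xi> \<in> R_kernel n (n - k) \<eta> \<tau>"
    then have h: "\<forall>p<n. \<forall>q<n. (\<Sum>a<n. \<Sum>b<n. \<xi> [a, b] * R_op n k \<eta> \<tau> a b (nneg n p) (nneg n q)) = 0"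
      unfolding R_kernel_def using S by auto
    show "\<forall>a<n. \<forall>b<n. (\<Sum>p<n. \<Sum>q<n. \<xi> [p, q] * R_op n k \<eta> \<tau> p q a b) = 0"
    proof (intro allI impI)
      fix a b assume "a < n" "b < n"
      then show "(\<Sum>p<n. \<Sum>q<n. \<xi> [p, q] * R_op n k \<eta> \<tau> p q a b) = 0"
        using h[rule_format, of "nneg n a" "nneg n b"] by simp
    qed
  next
    assume "\<forall>a<n. \<forall>b<n. (\<Sum>p<n. \<Sum>q<n. \<xi> [p, q] * R_op n k \<eta> \<tau> p q a b) = 0"
    then show "Fm n \<xi> \<in> R_kernel n (n - k) \<eta> \<tau>"
      unfolding R_kernel_def using S T by auto
  qed
qed

lemma perp_ker:
  assumes "k < n"
  shows "x \<in> perp n (R_image n k \<eta> \<tau>) \<Longrightarrow> Fm n x \<in> R_kernel n (n - k) \<eta> \<tau>"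
    and "x \<in> R_kernel n (n - k) \<eta> \<tau> \<Longrightarrow> Fm n x \<in> perp n (R_image n k \<eta> \<tau>)"
proof -
  assume x: "x \<in> perp n (R_image n k \<eta> \<tau>)"
  then have xt: "x \<in> tens n 2" unfolding perp_def by blast
  show "Fm n x \<in> R_kernel n (n - k) \<eta> \<tau>"
    using x perp_char[OF xt] ker_char[OF assms xt] by simp
next
  assume x: "x \<in> R_kernel n (n - k) \<eta> \<tau>"
  then have xt: "x \<in> tens n 2" unfolding R_kernel_def by blast
  have "Fm n (Fm n x) \<in> R_kernel n (n - k) \<eta> \<tau>" using x by simp
  then show "Fm n x \<in> perp n (R_image n k \<eta> \<tau>)"
    using perp_char[OF Fm_tens[OF xt]] ker_char[OF assms Fm_tens[OF xt]] by simp
qed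

theorem theorem7p4:
  fixes n k :: nat and \<eta> \<tau> :: complex
  assumes "1 \<le> k" and "k < n" and "coprime n k" and "Im \<eta> > 0"
  shows "graded_alg_iso n (perp n (R_image n k \<eta> \<tau>)) (R_kernel n (n - k) \<eta> \<tau>)"
  unfolding graded_alg_iso_def
proof (intro exI[of _ "\<lambda>d. Fm n"] conjI allI ballI)
  fix d x assume "x \<in> tens n d"
  then show "Fm n x \<in> tens n d" by (rule Fm_tens)
next
  fix d x y c a
  show "Fm n (\<lambda>w. c * x w + a * y w) = (\<lambda>w. c * Fm n x w + a * Fm n y w)"
    by (simp add: Fm_def)
next
  fix d x
  show "(Fm n x \<in> ideal_comp n (R_kernel n (n - k) \<eta> \<tau>) d) =
        (x \<in> ideal_comp n (perp n (R_image n k \<eta> \<tau>)) d)"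
  proof
    assume "Fm n x \<in> ideal_comp n (R_kernel n (n - k) \<eta> \<tau>) d"
    from ideal_Fm[OF perp_ker(2)[OF assms(2)] this] show "x \<in> ideal_comp n (perp n (R_image n k \<eta> \<tau>)) d"
      by simp
  next
    assume "x \<in> ideal_comp n (perp n (R_image n k \<eta> \<tau>)) d"
    from ideal_Fm[OF perp_ker(1)[OF assms(2)] this]
    show "Fm n x \<in> ideal_comp n (R_kernel n (n - k) \<eta> \<tau>) d" .
  qed
next
  fix d y assume yt: "y \<in> tens n d"
  show "\<exists>x\<in>tens n d. (\<lambda>w. y w - Fm n x w) \<in> ideal_comp n (R_kernel n (n - k) \<eta> \<tau>) d"
  proof (rule bexI[of _ "Fm n y"])
    show "(\<lambda>w. y w - Fm n (Fm n y) w) \<in> ideal_comp n (R_kernel n (n - k) \<eta> \<tau>) d"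
      using zero_ideal by simp
  qed (rule Fm_tens[OF yt])
next
  fix a b x y
  show "(\<lambda>w. Fm n (tprod a x y) w - tprod a (Fm n x) (Fm n y) w)
          \<in> ideal_comp n (R_kernel n (n - k) \<eta> \<tau>) (a + b)"
    unfolding Fm_tprod using zero_ideal by simp
next
  show "(\<lambda>w. Fm n tunit w - tunit w) \<in> ideal_comp n (R_kernel n (n - k) \<eta> \<tau>) 0"
    unfolding Fm_tunit using zero_ideal by simp
qed

end
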